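(* If $M$ is a probabilistic epistemic structure over $\Phi$ and $M_c$ is the corresponding common-interpretation structure over $\Phi\times N$, then for every formula $\varphi$, state $\omega$ and player $i$: (a) $(M,\omega,i)\models^{\mathit{in}}\varphi$ iff $(M_c,\omega)\models\varphi_i^{\mathit{in}}$; (b) $(M,\omega,i)\models^{\mathit{out}}\varphi$ iff $(M_c,\omega)\models\varphi_i^{\mathit{out}}$.
   Context: Setting: $N=\{1,\dots,n\}$ players; formulas are built from primitive propositions by negation, conjunction, operators $CB_G$ ($G\subseteq N$ nonempty) and probability formulas $a_1\Pr_j(\varphi_1)+\dots+a_k\Pr_j(\varphi_k)\ge b$ ($a_l,b\in\mathbb{Q}$); $B_j\varphi$ abbreviates $\Pr_j(\varphi)=1$, $EB^1_G\varphi=\bigwedge_{j\in G}B_j\varphi$, $EB^{m+1}_G\varphi=EB^m_GEB^1_G\varphi$. An epistemic probability structure $M=(\Omega,(\Pi_j)_{j\in N},(\mathcal{P}_j)_{j\in N},(\pi_j)_{j\in N})$ over $\Phi$ has partitions $\Pi_i$ of $\Omega$, probability spaces $\mathcal{P}_i(\omega)=(\Omega_{i,\omega},\mathcal{F}_{i,\omega},\mu_{i,\omega})$, and player-specific truth assignments $\pi_i(\omega)$ to $\Phi$, satisfying: $\Omega_{i,\omega}=\Pi_i(\omega)$; $\mathcal{P}_i$ constant on cells of $\Pi_i$; $\Pi_i(\omega)\cap\Pi_j(\omega')\in\mathcal{F}_{i,\omega}$; and $\Pi_i(\omega)\cap[[p]]_i\in\mathcal{F}_{i,\omega}$. Outermost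 scope: $(M,\omega,i)\models^{\mathit{out}}p$ iff $\pi_i(\omega)(p)=\mathbf{true}$; negation/conjunction as usual; $(M,\omega,i)\models^{\mathit{out}}\sum_la_l\Pr_j(\varphi_l)\ge b$ iff $\sum_la_l\mu_{j,\omega}([[\varphi_l]]^{\mathit{out}}_i\cap\Omega_{j,\omega})\ge b$ with $[[\psi]]^{\mathit{out}}_i=\{\omega:(M,\omega,i)\models^{\mathit{out}}\psi\}$; $CB_G\varphi$ holds iff $EB^k_G\varphi$ holds for all $k\ge1$. Innermost scope $\models^{\mathit{in}}$ is the same except that probability formulas about $j$ use $[[\varphi_l]]^{\mathit{in}}_j$. The corresponding common-interpretation structure is $M_c=(\Omega,(\Pi_j),(\mathcal{P}_j),\pi)$ over primitive propositions $\Phi\times N$, with $\pi(\omega)((p,i))=\pi_i(\omega)(p)$; truth in $M_c$ is agent-independent: $(M_c,\omega)\models(p,i)$ iff $\pi(\omega)((p,i))=\mathbf{true}$, and $(M_c,\omega)\models\sum_la_l\Pr_j(\varphi_l)\ge b$ iff $\sum_la_l\mu_{j,\omega}([[\varphi_l]]\cap\Omega_{j,\omega})\ge b$. Translations, defined by induction: $p_i^{\mathit{in}}=(p,i)$; $(\neg\psi)_i^{\mathit{in}}=\neg\psi_i^{\mathit{in}}$; $(\psi\wedge\psi')_i^{\mathit{in}}=\psi_i^{\mathit{in}}\wedge\psi'^{\mathit{in}}_i$; $(\sum_la_l\Pr_j(\varphi_l)\ge b)_i^{\mathit{in}}=\sum_la_l\Pr_j((\varphi_l)_j^{\mathit{in}})\ge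 b$; $(CB_G\psi)_i^{\mathit{in}}=CB_G(\bigwedge_{j\in G}B_j\psi_j^{\mathit{in}})$. Similarly $p_i^{\mathit{out}}=(p,i)$; negation and conjunction componentwise; $(\sum_la_l\Pr_j(\varphi_l)\ge b)_i^{\mathit{out}}=\sum_la_l\Pr_j((\varphi_l)_i^{\mathit{out}})\ge b$; $(CB_G\psi)_i^{\mathit{out}}=CB_G(\psi_i^{\mathit{out}})$. *)

theory Defs
  imports "HOL-Probability.Probability"
begin

text \<open>Players form a finite linearly ordered type 'ag (playing the role of N = {1..n});
 primitive propositions have type 'p.  Lin j [(a1,phi1),...,(ak,phik)] b stands for
 a1 Pr_j(phi1) + ... + ak Pr_j(phik) >= b.\<close>

datatype ('p, 'ag) fm =
    Atom 'p
  | Neg "('p, 'ag) fm"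
  | Conj "('p, 'ag) fm" "('p, 'ag) fm"
  | Lin 'ag "(rat \<times> ('p, 'ag) fm) list" rat
  | CB "'ag set" "('p, 'ag) fm"

fun wf_fm :: "('p, 'ag) fm \<Rightarrow> bool" where
  "wf_fm (Atom p) = True"
| "wf_fm (Neg \<phi>) = wf_fm \<phi>"
| "wf_fm (Conj \<phi> \<psi>) = (wf_fm \<phi> \<and> wf_fm \<psi>)"
| "wf_fm (Lin j l b) = (l \<noteq> [] \<and> (\<forall>(a, \<psi>) \<in> set l. wf_fm \<psi>))"
| "wf_fm (CB G \<phi>) = (G \<noteq> {} \<and> wf_fm \<phi>)"

text \<open>B_j phi abbreviates Pr_j(phi) = 1, i.e. Pr_j(phi) >= 1 and -Pr_j(phi) >= -1.\<close>
definition Bel :: "'ag \<Rightarrow> ('p, 'ag) fm \<Rightarrow> ('p, 'ag) fm" where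
  "Bel j \<phi> = Conj (Lin j [(1, \<phi>)] 1) (Lin j [(-1, \<phi>)] (-1))"

fun bigconj :: "('p, 'ag) fm list \<Rightarrow> ('p, 'ag) fm" where
  "bigconj [x] = x"
| "bigconj (x # y # xs) = Conj x (bigconj (y # xs))"

record ('w, 'ag, 'p) eps =
  Omega :: "'w set"
  Part  :: "'ag \<Rightarrow> 'w \<Rightarrow> 'w set"      \<comment> \<open>Pi_i(omega): the cell of Pi_i containing omega\<close>
  Prb   :: "'ag \<Rightarrow> 'w \<Rightarrow> 'w measure"
  Val   :: "'ag \<Rightarrow> 'w \<Rightarrow> 'p \<Rightarrow> bool"

definition epistemic_prob_structure :: "('w, 'ag, 'p) eps \<Rightarrow> bool" where
  "epistemic_prob_structure M \<longleftrightarrow>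
     (\<forall>i. \<forall>\<omega>\<in>Omega M. \<omega> \<in> Part M i \<omega> \<and> Part M i \<omega> \<subseteq> Omega M \<and>
          (\<forall>\<omega>'\<in>Omega M. Part M i \<omega> = Part M i \<omega>' \<or> Part M i \<omega> \<inter> Part M i \<omega>' = {})) \<and>
     (\<forall>i. \<forall>\<omega>\<in>Omega M. prob_space (Prb M i \<omega>) \<and> space (Prb M i \<omega>) = Part M i \<omega>) \<and>
     (\<forall>i. \<forall>\<omega>\<in>Omega M. \<forall>\<omega>'\<in>Part M i \<omega>. Prb M i \<omega>' = Prb M i \<omega>) \<and>
     (\<forall>i j. \<forall>\<omega>\<in>Omega M. \<forall>\<omega>'\<in>Omega M. Part M i \<omega> \<inter> Part M j \<omega>' \<in> sets (Prb M i \<omega>)) \<and>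
     (\<forall>i p. \<forall>\<omega>\<in>Omega M. Part M i \<omega> \<inter> {\<omega>'\<in>Omega M. Val M i \<omega>' p} \<in> sets (Prb M i \<omega>))"

record ('w, 'ag, 'q) cis =
  COmega :: "'w set"
  CPart  :: "'ag \<Rightarrow> 'w \<Rightarrow> 'w set"
  CPrb   :: "'ag \<Rightarrow> 'w \<Rightarrow> 'w measure"
  CVal   :: "'w \<Rightarrow> 'q \<Rightarrow> bool"

definition corr :: "('w, 'ag, 'p) eps \<Rightarrow> ('w, 'ag, 'p \<times> 'ag) cis" where
  "corr M = \<lparr> COmega = Omega M, CPart = Part M, CPrb = Prb M,
              CVal = (\<lambda>\<omega> (p, i). Val M i \<omega> p) \<rparr>"

text \<open>Semantic unfolding of EB^1_G: the set of states at which every j in G assigns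
 probability 1 to the given set (for the in-scope semantics, to the set for player j).
 Since EB^(m+1) = EB^m EB^1, the extension of EB^k is the k-fold iterate.\<close>

definition eb1 :: "('w \<Rightarrow> 'ag \<Rightarrow> 'w measure) \<Rightarrow> 'ag set \<Rightarrow> 'w set \<Rightarrow> 'w set" where
  "eb1 P G S = {\<omega>. \<forall>j\<in>G. measure (P \<omega> j) (S \<inter> space (P \<omega> j)) = 1}"

definition eb1_in :: "('w, 'ag, 'p) eps \<Rightarrow> 'ag set \<Rightarrow> ('ag \<Rightarrow> 'w set) \<Rightarrow> ('ag \<Rightarrow> 'w set)" where
  "eb1_in M G F = (\<lambda>i. {\<omega>. \<forall>j\<in>G. measure (Prb M j \<omega>) (F j \<inter> space (Prb M j \<omega>)) = 1})"

fun ext_out :: "('w, 'ag, 'p) eps \<Rightarrow> 'ag \<Rightarrow> ('p, 'ag) fm \<Rightarrow> 'w set" where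
  "ext_out M i (Atom p) = {\<omega>. Val M i \<omega> p}"
| "ext_out M i (Neg \<phi>) = - ext_out M i \<phi>"
| "ext_out M i (Conj \<phi> \<psi>) = ext_out M i \<phi> \<inter> ext_out M i \<psi>"
| "ext_out M i (Lin j l b) =
     {\<omega>. (\<Sum>(a, \<psi>)\<leftarrow>l. real_of_rat a * measure (Prb M j \<omega>) (ext_out M i \<psi> \<inter> space (Prb M j \<omega>)))
           \<ge> real_of_rat b}"
| "ext_out M i (CB G \<phi>) =
     {\<omega>. \<forall>k\<ge>1. \<omega> \<in> (eb1 (\<lambda>\<omega> j. Prb M j \<omega>) G ^^ k) (ext_out M i \<phi>)}"

fun ext_in :: "('w, 'ag, 'p) eps \<Rightarrow> 'ag \<Rightarrow> ('p, 'ag) fm \<Rightarrow> 'w set" where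
  "ext_in M i (Atom p) = {\<omega>. Val M i \<omega> p}"
| "ext_in M i (Neg \<phi>) = - ext_in M i \<phi>"
| "ext_in M i (Conj \<phi> \<psi>) = ext_in M i \<phi> \<inter> ext_in M i \<psi>"
| "ext_in M i (Lin j l b) =
     {\<omega>. (\<Sum>(a, \<psi>)\<leftarrow>l. real_of_rat a * measure (Prb M j \<omega>) (ext_in M j \<psi> \<inter> space (Prb M j \<omega>)))
           \<ge> real_of_rat b}"
| "ext_in M i (CB G \<phi>) =
     {\<omega>. \<forall>k\<ge>1. \<omega> \<in> (eb1_in M G ^^ k) (\<lambda>j. ext_in M j \<phi>) i}"

fun ext_c :: "('w, 'ag, 'q) cis \<Rightarrow> ('q, 'ag) fm \<Rightarrow> 'w set" where
  "ext_c Mc (Atom q) = {\<omega>. CVal Mc \<omega> q}"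
| "ext_c Mc (Neg \<phi>) = - ext_c Mc \<phi>"
| "ext_c Mc (Conj \<phi> \<psi>) = ext_c Mc \<phi> \<inter> ext_c Mc \<psi>"
| "ext_c Mc (Lin j l b) =
     {\<omega>. (\<Sum>(a, \<psi>)\<leftarrow>l. real_of_rat a * measure (CPrb Mc j \<omega>) (ext_c Mc \<psi> \<inter> space (CPrb Mc j \<omega>)))
           \<ge> real_of_rat b}"
| "ext_c Mc (CB G \<phi>) =
     {\<omega>. \<forall>k\<ge>1. \<omega> \<in> (eb1 (\<lambda>\<omega> j. CPrb Mc j \<omega>) G ^^ k) (ext_c Mc \<phi>)}"

definition sat_out :: "('w, 'ag, 'p) eps \<Rightarrow> 'w \<Rightarrow> 'ag \<Rightarrow> ('p, 'ag) fm \<Rightarrow> bool" where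
  "sat_out M \<omega> i \<phi> \<longleftrightarrow> \<omega> \<in> ext_out M i \<phi>"

definition sat_in :: "('w, 'ag, 'p) eps \<Rightarrow> 'w \<Rightarrow> 'ag \<Rightarrow> ('p, 'ag) fm \<Rightarrow> bool" where
  "sat_in M \<omega> i \<phi> \<longleftrightarrow> \<omega> \<in> ext_in M i \<phi>"

definition sat_c :: "('w, 'ag, 'q) cis \<Rightarrow> 'w \<Rightarrow> ('q, 'ag) fm \<Rightarrow> bool" where
  "sat_c Mc \<omega> \<phi> \<longleftrightarrow> \<omega> \<in> ext_c Mc \<phi>"

fun tr_in :: "'ag::{finite,linorder} \<Rightarrow> ('p, 'ag) fm \<Rightarrow> ('p \<times> 'ag, 'ag) fm" where
  "tr_in i (Atom p) = Atom (p, i)"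
| "tr_in i (Neg \<psi>) = Neg (tr_in i \<psi>)"
| "tr_in i (Conj \<psi> \<psi>') = Conj (tr_in i \<psi>) (tr_in i \<psi>')"
| "tr_in i (Lin j l b) = Lin j (map (\<lambda>(a, \<psi>). (a, tr_in j \<psi>)) l) b"
| "tr_in i (CB G \<psi>) = CB G (bigconj (map (\<lambda>j. Bel j (tr_in j \<psi>)) (sorted_list_of_set G)))"

fun tr_out :: "'ag \<Rightarrow> ('p, 'ag) fm \<Rightarrow> ('p \<times> 'ag, 'ag) fm" where
  "tr_out i (Atom p) = Atom (p, i)"
| "tr_out i (Neg \<psi>) = Neg (tr_out i \<psi>)"
| "tr_out i (Conj \<psi> \<psi>') = Conj (tr_out i \<psi>) (tr_out i \<psi>')"
| "tr_out i (Lin j l b) = Lin j (map (\<lambda>(a, \<psi>). (a, tr_out i \<psi>)) l) b"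
| "tr_out i (CB G \<psi>) = CB G (tr_out i \<psi>)"

end

theory Submission
  imports Defs
begin

lemma out_eq: "ext_out M i \<phi> = ext_c (corr M) (tr_out i \<phi>)"
proof (induction \<phi> arbitrary: i)
  case (Lin j l b)
  have "(\<Sum>(a, \<psi>)\<leftarrow>l. real_of_rat a * measure (Prb M j \<omega>) (ext_out M i \<psi> \<inter> space (Prb M j \<omega>)))
      = (\<Sum>(a, \<psi>)\<leftarrow>map (\<lambda>(a, \<psi>). (a, tr_out i \<psi>)) l.
           real_of_rat a * measure (Prb M j \<omega>) (ext_c (corr M) \<psi> \<inter> space (Prb M j \<omega>)))" for \<omega>
    unfolding map_map
    by (rule arg_cong[where f=sum_list], rule map_cong, simp)
       (auto simp: Lin[of "(a,b)" for a b, simplified])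
  then show ?case by (simp add: corr_def)
qed (auto simp: corr_def)

lemma all_ge1: "(\<forall>k\<ge>1. P k) = (\<forall>k. P (Suc k))"
proof
  assume "\<forall>k. P (Suc k)"
  then show "\<forall>k\<ge>1. P k"
    by (metis Suc_le_D One_nat_def)
qed simp

lemma eb1_in_pow:
  "(eb1_in M G ^^ Suc k) F = (\<lambda>i. (eb1 (\<lambda>\<omega> j. Prb M j \<omega>) G ^^ k) (eb1_in M G F i))"
proof (induction k)
  case 0 show ?case by simp
next
  case (Suc k)
  have "(eb1_in M G ^^ Suc (Suc k)) F = eb1_in M G ((eb1_in M G ^^ Suc k) F)" by simp
  also have "\<dots> = (\<lambda>i. (eb1 (\<lambda>\<omega> j. Prb M j \<omega>) G ^^ Suc k) (eb1_in M G F i))"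
    unfolding Suc by (simp add: eb1_in_def eb1_def)
  finally show ?case .
qed

lemma space_sub:
  assumes "epistemic_prob_structure M" "\<omega> \<in> Omega M"
  shows "space (Prb M j \<omega>) \<subseteq> Omega M"
  using assms unfolding epistemic_prob_structure_def by blast

lemma sp_restrict:
  assumes M: "epistemic_prob_structure M" and w: "\<omega> \<in> Omega M"
  shows "X \<inter> space (Prb M j \<omega>) = (X \<inter> Omega M) \<inter> space (Prb M j \<omega>)"
  using space_sub[OF M w, of j] by blast

lemma eb1_restrict:
  assumes M: "epistemic_prob_structure M" and w: "\<omega> \<in> Omega M"
  shows "(\<omega> \<in> eb1 (\<lambda>\<omega> j. Prb M j \<omega>) G X) = (\<omega> \<in> eb1 (\<lambda>\<omega> j. Prb M j \<omega>) G (X \<inter> Omega M))"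
proof -
  have "\<And>j. (X \<inter> Omega M) \<inter> space (Prb M j \<omega>) = X \<inter> space (Prb M j \<omega>)"
    using sp_restrict[OF M w] by metis
  then show ?thesis unfolding eb1_def by simp
qed

lemma eb1_cong:
  assumes M: "epistemic_prob_structure M" and AB: "A \<inter> Omega M = B \<inter> Omega M"
  shows "(eb1 (\<lambda>\<omega> j. Prb M j \<omega>) G ^^ k) A \<inter> Omega M = (eb1 (\<lambda>\<omega> j. Prb M j \<omega>) G ^^ k) B \<inter> Omega M"
proof (induction k)
  case 0 then show ?case using AB by simp
next
  case (Suc k)
  show ?case
  proof (intro set_eqI)
    fix x
    show "x \<in> (eb1 (\<lambda>\<omega> j. Prb M j \<omega>) G ^^ Suc k) A \<inter> Omega M \<longleftrightarrow>
          x \<in> (eb1 (\<lambda>\<omega> j. Prb M j \<omega>) G ^^ Suc k) B \<inter> Omega M"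
    proof (cases "x \<in> Omega M")
      case True
      show ?thesis
        using eb1_restrict[OF M True, of G "(eb1 (\<lambda>\<omega> j. Prb M j \<omega>) G ^^ k) A"]
              eb1_restrict[OF M True, of G "(eb1 (\<lambda>\<omega> j. Prb M j \<omega>) G ^^ k) B"] Suc True
        by simp
    qed simp
  qed
qed

lemma introspect:
  assumes M: "epistemic_prob_structure M" and w: "\<omega> \<in> Omega M"
    and h: "\<omega> \<in> eb1 (\<lambda>\<omega> j. Prb M j \<omega>) G (eb1_in M G F i)"
  shows "\<omega> \<in> eb1_in M G F i"
proof -
  have "measure (Prb M j \<omega>) (F j \<inter> space (Prb M j \<omega>)) = 1" if j: "j \<in> G" for j
  proof -
    have m: "measure (Prb M j \<omega>) (eb1_in M G F i \<inter> space (Prb M j \<omega>)) = 1"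
      using h j by (simp add: eb1_def)
    have "eb1_in M G F i \<inter> space (Prb M j \<omega>) \<noteq> {}"
    proof
      assume "eb1_in M G F i \<inter> space (Prb M j \<omega>) = {}"
      with m show False by simp
    qed
    then obtain w' where w1: "w' \<in> eb1_in M G F i" and w2: "w' \<in> space (Prb M j \<omega>)" by blast
    have "space (Prb M j \<omega>) = Part M j \<omega>" using M w unfolding epistemic_prob_structure_def by blast
    with w2 have "Prb M j w' = Prb M j \<omega>" using M w unfolding epistemic_prob_structure_def by blast
    moreover have "measure (Prb M j w') (F j \<inter> space (Prb M j w')) = 1"
      using w1 j by (simp add: eb1_in_def)
    ultimately show ?thesis by simp
  qed
  then show ?thesis by (simp add: eb1_in_def)
qed

lemma ext_bigconj:
  assumes "xs \<noteq> []"
  shows "ext_c Mc (bigconj xs) = (\<Inter>x\<in>set xs. ext_c Mc x)"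
  using assms by (induction xs rule: bigconj.induct) auto

lemma ext_Bel:
  "ext_c Mc (Bel j \<phi>) = {\<omega>. measure (CPrb Mc j \<omega>) (ext_c Mc \<phi> \<inter> space (CPrb Mc j \<omega>)) = 1}"
  by (auto simp: Bel_def)

lemma in_eq:
  assumes M: "epistemic_prob_structure M"
  shows "wf_fm \<phi> \<Longrightarrow> ext_in M i \<phi> \<inter> Omega M = ext_c (corr M) (tr_in i \<phi>) \<inter> Omega M"
proof (induction \<phi> arbitrary: i)
  case (Atom p) then show ?case by (auto simp: corr_def)
next
  case (Neg \<phi>) then show ?case by auto
next
  case (Conj \<phi>1 \<phi>2) then show ?case by auto
next
  case (Lin j l b)
  have "(\<Sum>(a, \<psi>)\<leftarrow>l. real_of_rat a * measure (Prb M j \<omega>) (ext_in M j \<psi> \<inter> space (Prb M j \<omega>)))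
      = (\<Sum>(a, \<psi>)\<leftarrow>map (\<lambda>(a, \<psi>). (a, tr_in j \<psi>)) l.
           real_of_rat a * measure (Prb M j \<omega>) (ext_c (corr M) \<psi> \<inter> space (Prb M j \<omega>)))"
    if w: "\<omega> \<in> Omega M" for \<omega>
  proof -
    have sp: "X \<inter> space (Prb M j \<omega>) = X \<inter> Omega M \<inter> space (Prb M j \<omega>)" for X
      using space_sub[OF M w, of j] by blast
    show ?thesis
      unfolding map_map
    proof (rule arg_cong[where f=sum_list], rule map_cong, simp)
      fix x assume x: "x \<in> set l"
      obtain a \<psi> where xe: "x = (a, \<psi>)" by force
      have "wf_fm \<psi>" using Lin.prems x xe by auto
      then have "ext_in M j \<psi> \<inter> Omega M = ext_c (corr M) (tr_in j \<psi>) \<inter> Omega M"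
        using Lin.IH[of x, OF x] xe by auto
      then show "(\<lambda>(a, \<psi>). real_of_rat a * measure (Prb M j \<omega>) (ext_in M j \<psi> \<inter> space (Prb M j \<omega>))) x =
         ((\<lambda>(a, \<psi>). real_of_rat a * measure (Prb M j \<omega>) (ext_c (corr M) \<psi> \<inter> space (Prb M j \<omega>))) \<circ>
          (\<lambda>(a, \<psi>). (a, tr_in j \<psi>))) x"
        using xe sp by (metis comp_apply case_prod_conv)
    qed
  qed
  then show ?case by (auto simp: corr_def)
next
  case (CB G \<psi>)
  let ?P = "\<lambda>\<omega> j. Prb M j \<omega>"
  let ?F = "\<lambda>j. ext_in M j \<psi>"
  define E1 where "E1 = eb1_in M G ?F i"
  have Gne: "G \<noteq> {}" and wf: "wf_fm \<psi>" using CB.prems by auto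
  have IH: "ext_in M j \<psi> \<inter> Omega M = ext_c (corr M) (tr_in j \<psi>) \<inter> Omega M" for j
    using CB.IH wf by blast
  have sl: "sorted_list_of_set G \<noteq> []" using Gne by simp
  have bc: "ext_c (corr M) (bigconj (map (\<lambda>j. Bel j (tr_in j \<psi>)) (sorted_list_of_set G)))
     = {\<omega>. \<forall>j\<in>G. measure (Prb M j \<omega>) (ext_c (corr M) (tr_in j \<psi>) \<inter> space (Prb M j \<omega>)) = 1}"
    using sl by (auto simp: ext_bigconj ext_Bel corr_def)
  have E1eq: "E1 \<inter> Omega M = ext_c (corr M) (bigconj (map (\<lambda>j. Bel j (tr_in j \<psi>)) (sorted_list_of_set G))) \<inter> Omega M"
  proof (intro set_eqI)
    fix \<omega>
    show "\<omega> \<in> E1 \<inter> Omega M \<longleftrightarrow> \<omega> \<in> ext_c (corr M) (bigconj (map (\<lambda>j. Bel j (tr_in j \<psi>)) (sorted_list_of_set G))) \<inter> Omega M"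
    proof (cases "\<omega> \<in> Omega M")
      case True
      have "ext_in M j \<psi> \<inter> space (Prb M j \<omega>) = ext_c (corr M) (tr_in j \<psi>) \<inter> space (Prb M j \<omega>)" for j
        using sp_restrict[OF M True, of "ext_in M j \<psi>" j] sp_restrict[OF M True, of "ext_c (corr M) (tr_in j \<psi>)" j] IH[of j]
        by simp
      then show ?thesis unfolding bc E1_def eb1_in_def using True by simp
    qed simp
  qed
  have lhs: "\<omega> \<in> ext_in M i (CB G \<psi>) \<longleftrightarrow> (\<forall>k. \<omega> \<in> (eb1 ?P G ^^ k) E1)" for \<omega>
  proof -
    have "\<omega> \<in> ext_in M i (CB G \<psi>) \<longleftrightarrow> (\<forall>k\<ge>1. \<omega> \<in> (eb1_in M G ^^ k) ?F i)" by simp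
    also have "\<dots> \<longleftrightarrow> (\<forall>k. \<omega> \<in> (eb1_in M G ^^ Suc k) ?F i)"
      by (rule all_ge1)
    also have "\<dots> \<longleftrightarrow> (\<forall>k. \<omega> \<in> (eb1 ?P G ^^ k) E1)"
      unfolding eb1_in_pow E1_def by simp
    finally show ?thesis .
  qed
  have rhs: "\<omega> \<in> ext_c (corr M) (tr_in i (CB G \<psi>)) \<inter> Omega M \<longleftrightarrow>
     \<omega> \<in> Omega M \<and> (\<forall>k\<ge>1. \<omega> \<in> (eb1 ?P G ^^ k) E1)" for \<omega>
  proof -
    have "\<omega> \<in> ext_c (corr M) (tr_in i (CB G \<psi>)) \<inter> Omega M \<longleftrightarrow>
       \<omega> \<in> Omega M \<and> (\<forall>k\<ge>1. \<omega> \<in> (eb1 ?P G ^^ k) (ext_c (corr M) (bigconj (map (\<lambda>j. Bel j (tr_in j \<psi>)) (sorted_list_of_set G)))))"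
      by (auto simp: corr_def)
    also have "\<dots> \<longleftrightarrow> \<omega> \<in> Omega M \<and> (\<forall>k\<ge>1. \<omega> \<in> (eb1 ?P G ^^ k) E1)"
      using eb1_cong[OF M E1eq[symmetric], where G=G] by blast
    finally show ?thesis .
  qed
  show ?case
  proof (intro set_eqI iffI)
    fix \<omega> assume "\<omega> \<in> ext_in M i (CB G \<psi>) \<inter> Omega M"
    then show "\<omega> \<in> ext_c (corr M) (tr_in i (CB G \<psi>)) \<inter> Omega M"
      using lhs rhs by blast
  next
    fix \<omega> assume a: "\<omega> \<in> ext_c (corr M) (tr_in i (CB G \<psi>)) \<inter> Omega M"
    then have w: "\<omega> \<in> Omega M" and k: "\<forall>k\<ge>1. \<omega> \<in> (eb1 ?P G ^^ k) E1" using rhs by blast+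
    have "\<omega> \<in> eb1 ?P G E1" using k[rule_format, of 1] by simp
    then have "\<omega> \<in> E1" using introspect[OF M w] unfolding E1_def by blast
    then have "\<forall>k. \<omega> \<in> (eb1 ?P G ^^ k) E1" using k all_ge1[of "\<lambda>k. \<omega> \<in> (eb1 ?P G ^^ k) E1"] by (metis funpow_0 old.nat.exhaust)
    then show "\<omega> \<in> ext_in M i (CB G \<psi>) \<inter> Omega M" using lhs w by blast
  qed
qed

theorem theorem2:
  fixes M :: "('w, 'ag::{finite,linorder}, 'p) eps"
    and \<phi> :: "('p, 'ag) fm" and \<omega> :: 'w and i :: 'ag
  assumes "epistemic_prob_structure M"
    and "wf_fm \<phi>"
    and "\<omega> \<in> Omega M"
  shows "(sat_in M \<omega> i \<phi> \<longleftrightarrow> sat_c (corr M) \<omega> (tr_in i \<phi>)) \<and>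
         (sat_out M \<omega> i \<phi> \<longleftrightarrow> sat_c (corr M) \<omega> (tr_out i \<phi>))"
  using in_eq[OF assms(1,2), of i] assms(3) out_eq[of M i \<phi>]
  unfolding sat_in_def sat_c_def sat_out_def by blast

end
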